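(* For all $n\in\mathbb{N}$, $D_n\equiv 1\pmod 3$.
   Context: For $n\in\mathbb{N}$, the Domb numbers are $D_n=\sum_{k=0}^n\binom{n}{k}^2\binom{2k}{k}\binom{2(n-k)}{n-k}$. *)

theory Defs
  imports Main "HOL-Number_Theory.Cong"
begin

definition domb :: "nat \<Rightarrow> nat" where
  "domb n = (\<Sum>k = 0..n. (n choose k)^2 * ((2*k) choose k) * ((2*(n-k)) choose (n-k)))"

end

theory Submission
  imports Defs
begin

lemma cong3_add: "[a = A] (mod 3) \<Longrightarrow> [b = B] (mod 3) \<Longrightarrow> [A + B = R] (mod 3) \<Longrightarrow> [a + b = (R::nat)] (mod 3)"
  by (metis cong_add cong_trans)

lemma div3_aux[simp]: "Suc (3*m) div 3 = m" "Suc (Suc (3*m)) div 3 = m" "Suc (Suc (Suc (3*m))) div 3 = Suc m"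
  by presburger+

lemma aux2: "(2::nat) choose Suc (Suc 0) = 1" "((x::nat)*2 + x) mod 3 = 0"
  by (simp add: numeral_2_eq_2, presburger)

lemma lucas3: "[n choose k = (n div 3 choose k div 3) * (n mod 3 choose k mod 3)] (mod 3)"
proof (induction n arbitrary: k)
  case 0
  show ?case
  proof (cases "k = 0")
    case False
    then have "k div 3 \<noteq> 0 \<or> k mod 3 \<noteq> 0" by presburger
    then show ?thesis using False by (auto simp: binomial_eq_0)
  qed auto
next
  case (Suc n)
  show ?case
  proof (cases k)
    case 0 then show ?thesis by simp
  next
    case (Suc k')
    define m where "m = n div 3"
    define r where "r = n mod 3"
    define j where "j = k' div 3"
    define s where "s = k' mod 3"
    have n: "n = 3*m+r" "r < 3" unfolding m_def r_def by auto
    have k': "k' = 3*j+s" "s < 3" unfolding j_def s_def by auto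
    have h1: "[n choose k' = (n div 3 choose k' div 3) * (n mod 3 choose k' mod 3)] (mod 3)" by (rule Suc.IH)
    have h2: "[n choose Suc k' = (n div 3 choose Suc k' div 3) * (n mod 3 choose Suc k' mod 3)] (mod 3)" by (rule Suc.IH)
    have e: "Suc n choose k = (n choose k') + (n choose Suc k')" using Suc by simp
    have rr: "r = 0 \<or> r = 1 \<or> r = 2" and ss: "s = 0 \<or> s = 1 \<or> s = 2" using n k' by auto
    show ?thesis unfolding e
      apply (rule cong3_add[OF h1 h2])
      using rr ss unfolding n k' Suc
      by (auto simp: cong_def binomial_eq_0 aux2)
  qed
qed

definition T :: "nat \<Rightarrow> nat \<Rightarrow> nat" where
  "T n k = (n choose k)^2 * ((2*k) choose k) * ((2*(n-k)) choose (n-k))"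

lemma div3b[simp]: "r < 3 \<Longrightarrow> (3*m+r) div 3 = (m::nat)" "r < 3 \<Longrightarrow> (3*m+r) mod 3 = r"
  by auto

lemma central3: "[(2*a) choose a = (2*(a div 3) choose (a div 3)) * (2*(a mod 3) choose (a mod 3))] (mod 3)"
proof -
  define b where "b = a div 3"
  define t where "t = a mod 3"
  have a: "a = 3*b+t" "t < 3" unfolding b_def t_def by auto
  have L: "[(2*a) choose a = ((2*a) div 3 choose b) * ((2*a) mod 3 choose t)] (mod 3)"
    using lucas3[of "2*a" a] unfolding b_def t_def .
  have "t = 0 \<or> t = 1 \<or> t = 2" using a by auto
  moreover
  { assume t: "t = 0"
    have "(2*a) div 3 = 2*b" "(2*a) mod 3 = 0" using a t by presburger+
    then have ?thesis using L t unfolding b_def[symmetric] t_def[symmetric] by simp }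
  moreover
  { assume t: "t = 1"
    have "(2*a) div 3 = 2*b" "(2*a) mod 3 = 2" using a t by presburger+
    then have ?thesis using L t unfolding b_def[symmetric] t_def[symmetric] by simp }
  moreover
  { assume t: "t = 2"
    have "(2*a) div 3 = 2*b+1" "(2*a) mod 3 = 1" using a t by presburger+
    then have "[(2*a) choose a = 0] (mod 3)" using L t by (simp add: binomial_eq_0)
    moreover have "(2*t choose t) = 6" using t by (simp add: numeral_eq_Suc)
    ultimately have ?thesis unfolding b_def[symmetric] t_def[symmetric]
      by (simp add: cong_def) }
  ultimately show ?thesis by blast
qed

lemma Tmul:
  assumes "r < 3" "s < 3"
  shows "[T (3*m+r) (3*j+s) = T m j * T r s] (mod 3)"
proof -
  define n where "n = 3*m+r"
  define k where "k = 3*j+s"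
  have c1: "[n choose k = (m choose j) * (r choose s)] (mod 3)"
    using lucas3[of n k] assms unfolding n_def k_def by simp
  have c2: "[(2*k) choose k = (2*j choose j) * (2*s choose s)] (mod 3)"
    using central3[of k] assms unfolding k_def by simp
  have L: "[T n k = ((m choose j) * (r choose s))^2 * ((2*k) choose k) * ((2*(n-k)) choose (n-k))] (mod 3)"
    unfolding T_def by (intro cong_mult cong_pow c1 cong_refl)
  show ?thesis
  proof (cases "j \<le> m \<and> s \<le> r")
    case True
    have nk: "n - k = 3*(m-j) + (r-s)" using True unfolding n_def k_def by auto
    have c3: "[(2*(n-k)) choose (n-k) = (2*(m-j) choose (m-j)) * (2*(r-s) choose (r-s))] (mod 3)"
      using central3[of "n-k"] assms unfolding nk by simp
    have "[((m choose j) * (r choose s))^2 * ((2*k) choose k) * ((2*(n-k)) choose (n-k)) = ((m choose j) * (r choose s))^2 * ((2*j choose j) * (2*s choose s)) * ((2*(m-j) choose (m-j)) * (2*(r-s) choose (r-s)))] (mod 3)"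
      by (intro cong_mult cong_refl c2 c3)
    with L have *: "[T n k = ((m choose j) * (r choose s))^2 * ((2*j choose j) * (2*s choose s)) * ((2*(m-j) choose (m-j)) * (2*(r-s) choose (r-s)))] (mod 3)"
      by (rule cong_trans)
    have "((m choose j) * (r choose s))^2 * ((2*j choose j) * (2*s choose s)) * ((2*(m-j) choose (m-j)) * (2*(r-s) choose (r-s))) = T m j * T r s"
      unfolding T_def power_mult_distrib by (simp only: mult_ac)
    with * show ?thesis unfolding n_def k_def by simp
  next
    case False
    then have z1: "(m choose j) * (r choose s) = 0" by (auto simp: binomial_eq_0)
    have z2: "T m j * T r s = 0" using False by (auto simp: T_def binomial_eq_0)
    have "[T n k = 0] (mod 3)" using L unfolding z1 by simp
    then show ?thesis unfolding z2 n_def k_def .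
  qed
qed

lemma sum3: "(\<Sum>k<3*(M::nat). (f::nat\<Rightarrow>nat) k) = (\<Sum>j<M. f (3*j) + f (3*j+1) + f (3*j+2))"
proof (induction M)
  case (Suc M)
  have e: "3 * Suc M = Suc (Suc (Suc (3*M)))" by simp
  show ?case by (simp only: e sum.lessThan_Suc Suc.IH) (simp add: add_ac)
qed simp

lemma domb_sum: "n < N \<Longrightarrow> domb n = (\<Sum>k<N. T n k)"
proof -
  assume "n < N"
  have "domb n = (\<Sum>k\<in>{..n}. T n k)" unfolding domb_def T_def atLeast0AtMost ..
  also have "\<dots> = (\<Sum>k<N. T n k)"
    by (rule sum.mono_neutral_left) (use \<open>n < N\<close> in \<open>auto simp: T_def binomial_eq_0\<close>)
  finally show ?thesis .
qed

lemma dombr: "domb r = T r 0 + T r 1 + T r 2" if "r < 3"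
  using domb_sum[of r 3] sum3[of "T r" 1] that by (simp add: numeral_2_eq_2)

lemma lucasD:
  assumes "r < 3"
  shows "[domb (3*m+r) = domb m * domb r] (mod 3)"
proof -
  have e1: "domb (3*m+r) = (\<Sum>j<Suc m. T (3*m+r) (3*j) + T (3*m+r) (3*j+1) + T (3*m+r) (3*j+2))"
    using domb_sum[of "3*m+r" "3*Suc m"] sum3[of "T (3*m+r)" "Suc m"] assms by simp
  moreover have e2: "[(\<Sum>j<Suc m. T (3*m+r) (3*j) + T (3*m+r) (3*j+1) + T (3*m+r) (3*j+2))
     = (\<Sum>j<Suc m. T m j * T r 0 + T m j * T r 1 + T m j * T r 2)] (mod 3)"
  proof (rule cong_sum)
    fix j
    have a: "[T (3*m+r) (3*j) = T m j * T r 0] (mod 3)" using Tmul[of r 0 m j] assms by simp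
    have b: "[T (3*m+r) (3*j+1) = T m j * T r 1] (mod 3)" using Tmul[of r 1 m j] assms by simp
    have c: "[T (3*m+r) (3*j+2) = T m j * T r 2] (mod 3)" using Tmul[of r 2 m j] assms by simp
    show "[T (3*m+r) (3*j) + T (3*m+r) (3*j+1) + T (3*m+r) (3*j+2) = T m j * T r 0 + T m j * T r 1 + T m j * T r 2] (mod 3)"
      by (intro cong_add a b c)
  qed
  moreover have e3: "(\<Sum>j<Suc m. T m j * T r 0 + T m j * T r 1 + T m j * T r 2) = domb m * domb r"
  proof -
    have "(\<Sum>j<Suc m. T m j * T r 0 + T m j * T r 1 + T m j * T r 2) = (\<Sum>j<Suc m. T m j * (T r 0 + T r 1 + T r 2))"
      by (simp only: distrib_left)
    also have "\<dots> = (\<Sum>j<Suc m. T m j) * (T r 0 + T r 1 + T r 2)"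
      by (rule sum_distrib_right[symmetric])
    also have "\<dots> = domb m * domb r"
      by (simp only: domb_sum[of m "Suc m", OF lessI] dombr[OF assms])
    finally show ?thesis .
  qed
  show ?thesis using e2 unfolding e1 e3 .
qed

lemma small: "r < 3 \<Longrightarrow> [domb r = 1] (mod 3)"
proof -
  assume r: "r < 3"
  have "domb 0 = 1" using dombr[of 0] by (simp add: T_def)
  moreover have "domb 1 = 4" using dombr[of 1] by (simp add: T_def)
  moreover have "domb 2 = 28" using dombr[of 2] by (simp add: T_def numeral_eq_Suc)
  moreover have "r = 0 \<or> r = 1 \<or> r = 2" using r by auto
  ultimately show ?thesis by (auto simp: cong_def)
qed

theorem lemma3p3:
  fixes n :: nat
  shows "[domb n = 1] (mod 3)"
proof (induction n rule: less_induct)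
  case (less n)
  show ?case
  proof (cases "n < 3")
    case True then show ?thesis by (rule small)
  next
    case False
    have n: "n = 3*(n div 3) + n mod 3" by simp
    have "[domb n = domb (n div 3) * domb (n mod 3)] (mod 3)"
      using lucasD[of "n mod 3" "n div 3"] n by simp
    moreover have "[domb (n div 3) = 1] (mod 3)" using less False by simp
    moreover have "[domb (n mod 3) = 1] (mod 3)" by (rule small) simp
    ultimately show ?thesis by (metis cong_mult cong_trans mult_1)
  qed
qed
end
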